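(* For every $j\in\tfrac12\mathbb{N}^+$ and $1\le a,b\le 2j+1$, the $(a,b)$-entry of $K^{(j)}(t)$ equals \[ K^{(j)}_{(a,b)}(t)=\psi(a,b,j)\,t^{b-a-2j}\,y^{b-2j-1}\widetilde\Delta^{(-2j)}(-t^2)x^{1-a}, \qquad \psi(a,b,j)=q^{\rho(a,b,j)}\big([2j]_q^!\big)^{-1}\Big(\frac{[b-1]_q^![2j+1-a]_q^!}{[a-1]_q^![2j+1-b]_q^!}\Big)^{1/2}. \]
   Context: $\mathbb{F}$ is a field of characteristic zero in which every element has a square root; $q\in\mathbb{F}$ is nonzero and not a root of unity, with a fixed square root $q^{1/2}$ ($q^{k/2}:=(q^{1/2})^k$). Square roots $(\cdot)^{1/2}$ of ratios below are fixed choices in $\mathbb{F}$, chosen so that $\big(\frac{B}{A}\big)^{1/2}=\frac{B}{A}\big(\frac{A}{B}\big)^{1/2}$. $[n]_q=\frac{q^n-q^{-n}}{q-q^{-1}}$, $[n]_q^!=[n]_q\cdots[1]_q$, $[0]_q^!=1$. $\tfrac12\mathbb{N}^+=\{\tfrac12,1,\tfrac32,\dots\}$. $\mathbb{V}$ is the free algebra on letters $x,y$ with basis the words ($\mathbf 1$ empty word); $t$ an indeterminate. $\bar x=1,\bar y=-1$; a word $a_1\cdots a_n$ is Catalan if $\bar a_1+\dots+\bar a_i\ge0$ ($i<n$) and $\bar a_1+\dots+\bar a_n=0$; $\mathrm{Cat}_n$ = Catalan words of length $2n$. $\Delta^{(m)}_n=\sum_{a_1\cdots a_{2n}\in\mathrm{Cat}_n}\prod_{i=1}^{2n}[\bar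 a_1+\dots+\bar a_{i-1}+m(\bar a_i+1)/2]_q\,a_1\cdots a_{2n}$, $\Delta^{(m)}(t)=\sum_n\Delta^{(m)}_nt^n$; $\widetilde\Delta^{(m)}_n$ is obtained from $\Delta^{(m)}_n$ by interchanging $x$ and $y$ in every word, $\widetilde\Delta^{(m)}(t)=\sum_n\widetilde\Delta^{(m)}_nt^n$; $\Delta^{(m)}(-t^2)=\sum_n(-1)^n\Delta^{(m)}_nt^{2n}$, etc. Deletion: $x^{-1}w$ deletes a leading $x$ of a word $w$ (result $0$ if $w$ does not start with $x$, including $w=\mathbf 1$); $y^{-1}w$, $wx^{-1}$, $wy^{-1}$ analogously (leading $y$, trailing $x$, trailing $y$); extended linearly and coefficientwise; negative exponent $-k$ means $k$-fold application, exponent $0$ the identity. $\rho(a,b,j)=(a^2+b^2+6j^2+4ab-6aj-6bj-6a-6b+13j+6)/2$. $K^{(j)}(t)$ is the $(2j+1)\times(2j+1)$ matrix with $K^{(j)}_{(a,b)}(t)=\varphi(a,b,j)t^{a-b-2j}x^{1-b}\Delta^{(-2j)}(-t^2)y^{a-2j-1}$, where $\varphi(a,b,j)=q^{\rho(a,b,j)}([2j]_q^!)^{-1}\big(\frac{[a-1]_q^![2j+1-b]_q^!}{[b-1]_q^![2j+1-a]_q^!}\big)^{1/2}$. *)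

theory Defs
  imports Complex_Main
begin

text \<open>Letters of the free algebra V on x, y.  A word is a list of letters;
  an element of V is represented by its coefficient function on words
  (word \<Rightarrow> field element), and a formal (Laurent) series in t with
  coefficients in V by its coefficient function int \<Rightarrow> word \<Rightarrow> field element
  (coefficient of t^k w).\<close>

datatype letter = X | Y

type_synonym word = "letter list"
type_synonym 'a vel = "word \<Rightarrow> 'a"
type_synonym 'a tser = "int \<Rightarrow> word \<Rightarrow> 'a"

fun bar :: "letter \<Rightarrow> int" where
  "bar X = 1" | "bar Y = -1"

fun swap_letter :: "letter \<Rightarrow> letter" where
  "swap_letter X = Y" | "swap_letter Y = X"

definition height :: "word \<Rightarrow> int" where
  "height w = sum_list (map bar w)"

definition catalan :: "word \<Rightarrow> bool" where
  "catalan w \<longleftrightarrow> (\<forall>i<length w. 0 \<le> height (take i w)) \<and> height w = 0"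

definition Cat :: "nat \<Rightarrow> word set" where
  "Cat n = {w. catalan w \<and> length w = 2 * n}"

definition qint :: "'a::field \<Rightarrow> int \<Rightarrow> 'a" where
  "qint q k = (q powi k - q powi (-k)) / (q - inverse q)"

definition qfact :: "'a::field \<Rightarrow> nat \<Rightarrow> 'a" where
  "qfact q n = (\<Prod>i=1..n. qint q (int i))"

definition Delta :: "'a::field \<Rightarrow> int \<Rightarrow> nat \<Rightarrow> 'a vel" where
  "Delta q m n w = (if w \<in> Cat n then
      (\<Prod>i<length w. qint q (height (take i w) + m * ((bar (w ! i) + 1) div 2)))
    else 0)"

definition DeltaT :: "'a::field \<Rightarrow> int \<Rightarrow> nat \<Rightarrow> 'a vel" where
  "DeltaT q m n w = Delta q m n (map swap_letter w)"

text \<open>For D = (D_n)_n, the series  sum_n D_n (-t^2)^n = sum_n (-1)^n D_n t^(2n).\<close>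
definition ser_neg_sq :: "(nat \<Rightarrow> 'a::field vel) \<Rightarrow> 'a tser" where
  "ser_neg_sq D k w = (if 0 \<le> k \<and> even k then (-1) ^ (nat k div 2) * D (nat k div 2) w else 0)"

text \<open>Left action of L^e on V (e \<le> 0: (-e)-fold deletion of a leading L;
  e > 0: left multiplication by L^e), extended coefficientwise to series.\<close>
definition lpow :: "letter \<Rightarrow> int \<Rightarrow> 'a::zero vel \<Rightarrow> 'a vel" where
  "lpow L e f w = (if e \<le> 0 then f (replicate (nat (-e)) L @ w)
     else if take (nat e) w = replicate (nat e) L then f (drop (nat e) w) else 0)"

text \<open>Right action of L^e on V (e \<le> 0: (-e)-fold deletion of a trailing L;
  e > 0: right multiplication by L^e).\<close>
definition rpow :: "letter \<Rightarrow> int \<Rightarrow> 'a::zero vel \<Rightarrow> 'a vel" where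
  "rpow L e f w = (if e \<le> 0 then f (w @ replicate (nat (-e)) L)
     else if drop (length w - nat e) w = replicate (nat e) L \<and> nat e \<le> length w
          then f (take (length w - nat e) w) else 0)"

definition lpow_s :: "letter \<Rightarrow> int \<Rightarrow> 'a::zero tser \<Rightarrow> 'a tser" where
  "lpow_s L e S k = lpow L e (S k)"

definition rpow_s :: "letter \<Rightarrow> int \<Rightarrow> 'a::zero tser \<Rightarrow> 'a tser" where
  "rpow_s L e S k = rpow L e (S k)"

definition tmul :: "'a::times \<Rightarrow> int \<Rightarrow> 'a tser \<Rightarrow> 'a tser" where
  "tmul c e S k w = c * S (k - e) w"

text \<open>rho(a,b,j) (a rational number) and q^r := (q^(1/2))^(2r) for r with 2r integer.\<close>
definition rho :: "int \<Rightarrow> int \<Rightarrow> rat \<Rightarrow> rat" where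
  "rho a b j = (of_int a ^ 2 + of_int b ^ 2 + 6 * j ^ 2 + 4 * of_int a * of_int b
      - 6 * of_int a * j - 6 * of_int b * j - 6 * of_int a - 6 * of_int b + 13 * j + 6) / 2"

definition qhpow :: "'a::field \<Rightarrow> rat \<Rightarrow> 'a" where
  "qhpow qh r = qh powi \<lfloor>2 * r\<rfloor>"

text \<open>Here n = 2j (so j = n/2 with n \<ge> 1), and sr is the fixed square-root choice.
  The numerator/denominator of the ratio under the square root in phi:\<close>
definition ratN :: "'a::field \<Rightarrow> nat \<Rightarrow> nat \<Rightarrow> nat \<Rightarrow> 'a" where
  "ratN q n a b = qfact q (a - 1) * qfact q (n + 1 - b)"

definition ratD :: "'a::field \<Rightarrow> nat \<Rightarrow> nat \<Rightarrow> nat \<Rightarrow> 'a" where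
  "ratD q n a b = qfact q (b - 1) * qfact q (n + 1 - a)"

definition phi :: "'a::field \<Rightarrow> 'a \<Rightarrow> ('a \<Rightarrow> 'a) \<Rightarrow> nat \<Rightarrow> nat \<Rightarrow> nat \<Rightarrow> 'a" where
  "phi q qh sr n a b = qhpow qh (rho (int a) (int b) (of_nat n / 2)) * inverse (qfact q n)
     * sr (ratN q n a b / ratD q n a b)"

definition psi :: "'a::field \<Rightarrow> 'a \<Rightarrow> ('a \<Rightarrow> 'a) \<Rightarrow> nat \<Rightarrow> nat \<Rightarrow> nat \<Rightarrow> 'a" where
  "psi q qh sr n a b = qhpow qh (rho (int a) (int b) (of_nat n / 2)) * inverse (qfact q n)
     * sr (ratD q n a b / ratN q n a b)"

definition Kmat :: "'a::field \<Rightarrow> 'a \<Rightarrow> ('a \<Rightarrow> 'a) \<Rightarrow> nat \<Rightarrow> nat \<Rightarrow> nat \<Rightarrow> 'a tser" where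
  "Kmat q qh sr n a b = tmul (phi q qh sr n a b) (int a - int b - int n)
     (lpow_s X (1 - int b) (rpow_s Y (int a - int n - 1) (ser_neg_sq (Delta q (- int n)))))"

end

theory Submission imports Defs begin

fun G :: "'a::field \<Rightarrow> int \<Rightarrow> int \<Rightarrow> int \<Rightarrow> word \<Rightarrow> 'a" where
  "G q n h t [] = (if h = t \<and> 0 \<le> h \<and> h \<le> n then 1 else 0)"
| "G q n h t (c#u) = (if 0 \<le> h \<and> h \<le> n then qint q (h + (- n) * ((bar c + 1) div 2)) * G q n (h + bar c) t u else 0)"

lemma height_simps[simp]: "height [] = 0" "height (c#u) = bar c + height u"
  "height (u @ v) = height u + height v"
  by (simp_all add: height_def)

lemma G_out: "\<not>(0 \<le> h \<and> h \<le> n) \<Longrightarrow> G q n h t u = 0"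
  by (cases u) auto

lemma G_ne: "G q n h t u \<noteq> 0 \<Longrightarrow> t = h + height u"
proof (induction u arbitrary: h)
  case (Cons c u)
  then have "G q n (h + bar c) t u \<noteq> 0" by (auto split: if_splits)
  from Cons.IH[OF this] show ?case by simp
qed (auto split: if_splits)

lemma height_rep[simp]: "height (replicate j X) = int j" "height (replicate j Y) = - int j"
  by (induction j) auto

lemma G_app: "G q n h t (u1 @ u2) = G q n h (h + height u1) u1 * G q n (h + height u1) t u2"
proof (induction u1 arbitrary: h)
  case Nil
  then show ?case by (auto simp: G_out)
next
  case (Cons c u1)
  then show ?case by (simp add: algebra_simps)
qed

lemma G_app2: "s = t - height u2 \<Longrightarrow> G q n h t (u1 @ u2) = G q n h s u1 * G q n s t u2"
proof (cases "s = h + height u1")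
  case True
  assume "s = t - height u2"
  then show ?thesis using True G_app by metis
next
  case False
  assume s: "s = t - height u2"
  have "G q n (h + height u1) t u2 = 0" using G_ne[of q n "h + height u1" t u2] s False by auto
  moreover have "G q n h s u1 = 0" using G_ne[of q n h s u1] False by auto
  ultimately show ?thesis using G_app by (metis mult_zero_left mult_zero_right)
qed

lemma qint_neg: "qint q (- k) = - qint q k"
  by (simp add: qint_def minus_divide_left)

lemma qint_0: "qint q 0 = 0" by (simp add: qint_def)

lemma G_refl: "G q n (n - h) (n - t) (map swap_letter u) = (-1) ^ length u * G q n h t u"
proof (induction u arbitrary: h)
  case Nil
  then show ?case by auto
next
  case (Cons c u)
  have e: "n - h + bar (swap_letter c) = n - (h + bar c)" by (cases c) auto
  have w: "qint q (n - h + - n * ((bar (swap_letter c) + 1) div 2)) = - qint q (h + - n * ((bar c + 1) div 2))"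
    by (cases c) (auto simp: qint_neg[symmetric])
  show ?case using Cons[of "h + bar c"] by (simp only: list.map G.simps e w) auto
qed

lemma G_Y: "int j \<le> n \<Longrightarrow> G q n (int j) 0 (replicate j Y) = qfact q j"
proof (induction j)
  case 0
  then show ?case by (simp add: qfact_def)
next
  case (Suc j)
  have "qfact q (Suc j) = qint q (int (Suc j)) * qfact q j"
    by (simp add: qfact_def prod.cl_ivl_Suc)
  then show ?case using Suc by simp
qed

lemma G_X: "int j \<le> n \<Longrightarrow> G q n 0 (int j) (replicate j X) * qfact q (nat n - j) = (-1) ^ j * qfact q (nat n)"
proof (induction j)
  case 0
  then show ?case by (simp add: qfact_def)
next
  case (Suc j)
  have r: "replicate (Suc j) X = replicate j X @ [X]" by (simp add: replicate_append_same)
  have g: "G q n 0 (int (Suc j)) (replicate (Suc j) X) = G q n 0 (int j) (replicate j X) * qint q (int j - n)"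
    unfolding r using Suc.prems by (subst G_app) auto
  have f: "qfact q (nat n - j) = qint q (n - int j) * qfact q (nat n - Suc j)"
  proof -
    have "nat n - j = Suc (nat n - Suc j)" using Suc.prems by auto
    then show ?thesis using Suc.prems by (simp add: qfact_def prod.cl_ivl_Suc)
  qed
  have "qint q (int j - n) = - qint q (n - int j)" using qint_neg[of q "n - int j"] by simp
  then show ?case using Suc f g by (simp add: algebra_simps)
qed

lemma D_G: "h \<le> n \<Longrightarrow> (if (\<forall>i<length u. 0 \<le> h + height (take i u)) \<and> h + height u = 0
   then (\<Prod>i<length u. qint q (h + height (take i u) + (- n) * ((bar (u!i) + 1) div 2))) else 0) = G q n h 0 u"
proof (induction u arbitrary: h)
  case Nil
  then show ?case by auto
next
  case (Cons c u)
  let ?h = "h + bar c"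
  have all: "(\<forall>i<length (c#u). 0 \<le> h + height (take i (c#u))) \<longleftrightarrow> 0 \<le> h \<and> (\<forall>i<length u. 0 \<le> ?h + height (take i u))"
    by (auto simp: less_Suc_eq_0_disj algebra_simps)
  have pr: "(\<Prod>i<length (c#u). qint q (h + height (take i (c#u)) + (- n) * ((bar ((c#u)!i) + 1) div 2)))
     = qint q (h + (- n) * ((bar c + 1) div 2)) * (\<Prod>i<length u. qint q (?h + height (take i u) + (- n) * ((bar (u!i) + 1) div 2)))"
    unfolding length_Cons prod.lessThan_Suc_shift by (simp add: algebra_simps)
  show ?case
  proof (cases "?h \<le> n")
    case True
    define C where "C = ((\<forall>i<length u. 0 \<le> ?h + height (take i u)) \<and> ?h + height u = 0)"
    define P where "P = (\<Prod>i<length u. qint q (?h + height (take i u) + (- n) * ((bar (u!i) + 1) div 2)))"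
    have IH: "(if C then P else 0) = G q n ?h 0 u" using Cons.IH[OF True] unfolding C_def P_def .
    have all': "((\<forall>i<length (c#u). 0 \<le> h + height (take i (c#u))) \<and> h + height (c#u) = 0) \<longleftrightarrow> 0 \<le> h \<and> C"
      unfolding C_def all by (simp add: algebra_simps)
    have G1: "G q n h 0 (c#u) = (if 0 \<le> h then qint q (h + (- n) * ((bar c + 1) div 2)) * G q n ?h 0 u else 0)"
      using Cons.prems by simp
    show ?thesis unfolding all' pr P_def[symmetric] G1 using IH
      by (cases C) auto
  next
    case False
    then have "h = n" "c = X" using Cons.prems by (cases c; auto)+
    then show ?thesis unfolding all pr by (auto simp: qint_0)
  qed
qed

lemma Delta_G: "Delta q (- int n) N u = (if length u = 2 * N then G q (int n) 0 0 u else 0)"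
proof -
  have "(if catalan u then (\<Prod>i<length u. qint q (height (take i u) + (- int n) * ((bar (u!i) + 1) div 2))) else 0) = G q (int n) 0 0 u"
    using D_G[of 0 "int n" u q] unfolding catalan_def by (simp only: add_0_left of_nat_0_le_iff)
  then show ?thesis by (auto simp: Delta_def Cat_def)
qed

lemma ser_G: "ser_neg_sq (Delta q (- int n)) kk u = (if kk = int (length u) \<and> even kk then (-1) ^ (length u div 2) * G q (int n) 0 0 u else 0)"
  unfolding ser_neg_sq_def Delta_G by auto

lemma qint_nz:
  fixes q :: "'a::field"
  assumes q0: "q \<noteq> 0" and nr: "\<forall>k::nat. k > 0 \<longrightarrow> q ^ k \<noteq> 1" and m: "m > 0"
  shows "qint q (int m) \<noteq> 0"
proof
  assume "qint q (int m) = 0"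
  moreover have "q - inverse q \<noteq> 0"
  proof
    assume "q - inverse q = 0"
    then have "q * q = 1" using q0 by (simp add: field_simps)
    then show False using nr[rule_format, of 2] by (simp add: power2_eq_square)
  qed
  ultimately have "q ^ m = inverse (q ^ m)" by (simp add: qint_def power_int_minus)
  then have "q ^ m * q ^ m = 1" using q0 by (simp add: field_simps)
  then have "q ^ (2*m) = 1" by (simp add: power_add mult_2)
  then show False using nr m by auto
qed

lemma qfact_nz:
  fixes q :: "'a::field"
  assumes q0: "q \<noteq> 0" and nr: "\<forall>k::nat. k > 0 \<longrightarrow> q ^ k \<noteq> 1"
  shows "qfact q j \<noteq> 0"
  unfolding qfact_def using qint_nz[OF q0 nr] by (simp add: prod_zero_iff)

lemma core:
  fixes A B C Dd F1 F2 Qn s1 s2 s3 \<sigma>1 \<sigma>2 :: "'a::field"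
  assumes "A*F1 = s1*Qn" "C*F2 = s2*Qn" "F2 \<noteq> 0" "B \<noteq> 0" "\<sigma>1*s1 = \<sigma>2*s3*s2"
  shows "(Dd*F1)/(F2*B) * \<sigma>1 * A * B = \<sigma>2 * s3 * C * Dd"
proof -
  have "(Dd*F1)/(F2*B) * \<sigma>1 * A * B = Dd * \<sigma>1 * (A * F1) / F2" using assms(3,4) by (simp add: field_simps)
  also have "\<dots> = Dd * (\<sigma>1 * s1) * Qn / F2" using assms(1) by (simp add: ac_simps)
  also have "\<dots> = Dd * (\<sigma>2 * s3 * s2) * Qn / F2" using assms(5) by simp
  also have "\<dots> = Dd * \<sigma>2 * s3 * (s2 * Qn) / F2" by (simp add: ac_simps)
  also have "\<dots> = Dd * \<sigma>2 * s3 * (C * F2) / F2" using assms by simp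
  also have "\<dots> = \<sigma>2 * s3 * C * Dd" using assms by (simp add: field_simps)
  finally show ?thesis .
qed

lemma neg1_par: "even (x + y) \<Longrightarrow> (-1::'a::ring_1) ^ x = (-1) ^ y"
  by (simp add: minus_one_power_iff)

lemma LHS_form:
  assumes "1 \<le> a" "a \<le> n + 1" "1 \<le> b" "b \<le> n + 1"
  shows "Kmat q qh sr n a b k w = phi q qh sr n a b *
     ser_neg_sq (Delta q (- int n)) (k - (int a - int b - int n)) (replicate (b - 1) X @ w @ replicate (n + 1 - a) Y)"
proof -
  have e: "nat (1 - (int a - int n)) = n + 1 - a" using assms by linarith
  show ?thesis using assms unfolding Kmat_def tmul_def lpow_s_def rpow_s_def lpow_def rpow_def
    by (simp add: e nat_diff_distrib)
qed

lemma RHS_form: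
  assumes "1 \<le> a" "a \<le> n + 1" "1 \<le> b" "b \<le> n + 1"
  shows "tmul (psi q qh sr n a b) (int b - int a - int n)
      (lpow_s Y (int b - int n - 1) (rpow_s X (1 - int a) (ser_neg_sq (DeltaT q (- int n))))) k w
   = psi q qh sr n a b *
     ser_neg_sq (Delta q (- int n)) (k - (int b - int a - int n)) (replicate (n + 1 - b) X @ map swap_letter w @ replicate (a - 1) Y)"
proof -
  have e: "nat (1 - (int b - int n)) = n + 1 - b" using assms by linarith
  have t: "ser_neg_sq (DeltaT q m) kk u = ser_neg_sq (Delta q m) kk (map swap_letter u)" for m kk u
    by (simp add: ser_neg_sq_def DeltaT_def)
  show ?thesis using assms unfolding tmul_def lpow_s_def rpow_s_def lpow_def rpow_def t
    by (simp add: e nat_diff_distrib)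
qed

theorem proposition6p6:
  fixes q qh :: "'a::field_char_0" and sr :: "'a \<Rightarrow> 'a" and n a b :: nat
  assumes sqrt_ex: "\<forall>z::'a. \<exists>r. r ^ 2 = z"
    and q_nz: "q \<noteq> 0"
    and q_not_root: "\<forall>k::nat. k > 0 \<longrightarrow> q ^ k \<noteq> 1"
    and qh: "qh ^ 2 = q"
    and sr_sq: "\<forall>n' a' b'. 1 \<le> n' \<and> 1 \<le> a' \<and> a' \<le> n' + 1 \<and> 1 \<le> b' \<and> b' \<le> n' + 1 \<longrightarrow>
        (sr (ratN q n' a' b' / ratD q n' a' b')) ^ 2 = ratN q n' a' b' / ratD q n' a' b'"
    and sr_compat: "\<forall>n' a' b'. 1 \<le> n' \<and> 1 \<le> a' \<and> a' \<le> n' + 1 \<and> 1 \<le> b' \<and> b' \<le> n' + 1 \<longrightarrow>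
        sr (ratN q n' a' b' / ratD q n' a' b')
          = (ratN q n' a' b' / ratD q n' a' b') * sr (ratD q n' a' b' / ratN q n' a' b')"
    and n: "1 \<le> n"
    and a: "1 \<le> a" "a \<le> n + 1"
    and b: "1 \<le> b" "b \<le> n + 1"
  shows "Kmat q qh sr n a b =
    tmul (psi q qh sr n a b) (int b - int a - int n)
      (lpow_s Y (int b - int n - 1) (rpow_s X (1 - int a) (ser_neg_sq (DeltaT q (- int n)))))"
proof (intro ext)
  fix k :: int and w :: word
  define a0 where "a0 = a - 1"
  define b0 where "b0 = b - 1"
  have aa: "a = Suc a0" and bb: "b = Suc b0" and a0n: "a0 \<le> n" and b0n: "b0 \<le> n"
    using a b by (auto simp: a0_def b0_def)
  define L where "L = length w"
  define u where "u = replicate b0 X @ w @ replicate (n - a0) Y"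
  define v where "v = replicate (n - b0) X @ map swap_letter w @ replicate a0 Y"
  define M where "M = G q (int n) (int b0) (int (n - a0)) w"
  define A where "A = G q (int n) 0 (int b0) (replicate b0 X)"
  define C where "C = G q (int n) 0 (int (n - b0)) (replicate (n - b0) X)"
  have Gu: "G q (int n) 0 0 u = A * M * qfact q (n - a0)"
  proof -
    have "G q (int n) 0 0 u = A * G q (int n) (int b0) 0 (w @ replicate (n - a0) Y)"
      unfolding u_def A_def by (subst G_app) simp
    also have "G q (int n) (int b0) 0 (w @ replicate (n - a0) Y) = M * G q (int n) (int (n - a0)) 0 (replicate (n - a0) Y)"
      unfolding M_def by (subst G_app2[where s = "int (n - a0)"]) (auto simp: a0n)
    also have "G q (int n) (int (n - a0)) 0 (replicate (n - a0) Y) = qfact q (n - a0)"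
      by (rule G_Y) simp
    finally show ?thesis by (simp add: ac_simps)
  qed
  have Gv: "G q (int n) 0 0 v = C * ((-1) ^ L * M) * qfact q a0"
  proof -
    have "G q (int n) 0 0 v = C * G q (int n) (int (n - b0)) 0 (map swap_letter w @ replicate a0 Y)"
      unfolding v_def C_def by (subst G_app) simp
    also have "G q (int n) (int (n - b0)) 0 (map swap_letter w @ replicate a0 Y)
       = G q (int n) (int (n - b0)) (int a0) (map swap_letter w) * G q (int n) (int a0) 0 (replicate a0 Y)"
      by (subst G_app2[where s = "int a0"]) auto
    also have "G q (int n) (int a0) 0 (replicate a0 Y) = qfact q a0"
      by (rule G_Y) (simp add: a0n)
    also have "G q (int n) (int (n - b0)) (int a0) (map swap_letter w) = (-1) ^ L * M"
    proof -
      have "G q (int n) (int n - int b0) (int n - int (n - a0)) (map swap_letter w) = (-1) ^ L * M"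
        unfolding M_def L_def by (rule G_refl)
      then show ?thesis using a0n b0n by (simp add: of_nat_diff)
    qed
    finally show ?thesis by (simp add: ac_simps)
  qed
  show "Kmat q qh sr n a b k w = tmul (psi q qh sr n a b) (int b - int a - int n)
      (lpow_s Y (int b - int n - 1) (rpow_s X (1 - int a) (ser_neg_sq (DeltaT q (- int n))))) k w"
  proof -
    have lu: "length u = b0 + L + (n - a0)" by (simp add: u_def L_def)
    have lv: "length v = (n - b0) + L + a0" by (simp add: v_def L_def)
    have u': "replicate (b - 1) X @ w @ replicate (n + 1 - a) Y = u" by (simp add: u_def aa bb)
    have v': "replicate (n + 1 - b) X @ map swap_letter w @ replicate (a - 1) Y = v" by (simp add: v_def aa bb)
    define kk1 where "kk1 = k - (int a - int b - int n)"
    define kk2 where "kk2 = k - (int b - int a - int n)"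
    have LHS: "Kmat q qh sr n a b k w = phi q qh sr n a b *
        (if kk1 = int (length u) \<and> even kk1 then (-1) ^ (length u div 2) * G q (int n) 0 0 u else 0)"
      using LHS_form[OF a b, of q qh sr k w] unfolding u' kk1_def[symmetric] ser_G .
    have RHS: "tmul (psi q qh sr n a b) (int b - int a - int n)
      (lpow_s Y (int b - int n - 1) (rpow_s X (1 - int a) (ser_neg_sq (DeltaT q (- int n))))) k w
      = psi q qh sr n a b *
        (if kk2 = int (length v) \<and> even kk2 then (-1) ^ (length v div 2) * G q (int n) 0 0 v else 0)"
      using RHS_form[OF a b, of q qh sr k w] unfolding v' kk2_def[symmetric] ser_G .
    have cond: "(kk1 = int (length u) \<and> even kk1) \<longleftrightarrow> (kk2 = int (length v) \<and> even kk2)"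
      unfolding lu lv kk1_def kk2_def aa bb using a0n b0n by (simp add: of_nat_diff) presburger
    show ?thesis
    proof (cases "kk1 = int (length u) \<and> even kk1")
      case False
      have F2: "\<not> (kk2 = int (length v) \<and> even kk2)" using False cond by blast
      show ?thesis unfolding LHS RHS if_not_P[OF False] if_not_P[OF F2] by simp
    next
      case True
      then have True2: "kk2 = int (length v) \<and> even kk2" using cond by blast
      have kL: "k = int L" using True unfolding lu kk1_def aa bb using a0n by (simp add: of_nat_diff)
      have evu: "even (length u)"
      proof -
        from True have e1: "kk1 = int (length u)" and e2: "even kk1" by blast+
        from e2 have "even (int (length u))" unfolding e1 .
        then show ?thesis by simp
      qed
      define Dd where "Dd = qfact q a0"
      define F1 where "F1 = qfact q (n - b0)"
      define F2 where "F2 = qfact q b0"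
      define B where "B = qfact q (n - a0)"
      define Qn where "Qn = qfact q n"
      define s1 :: 'a where "s1 = (-1) ^ b0"
      define s2 :: 'a where "s2 = (-1) ^ (n - b0)"
      define s3 :: 'a where "s3 = (-1) ^ L"
      define \<sigma>1 :: 'a where "\<sigma>1 = (-1) ^ (length u div 2)"
      define \<sigma>2 :: 'a where "\<sigma>2 = (-1) ^ (length v div 2)"
      have AF: "A * F1 = s1 * Qn" unfolding A_def F1_def s1_def Qn_def
        using G_X[of b0 "int n" q] b0n by simp
      have CF: "C * F2 = s2 * Qn" unfolding C_def F2_def s2_def Qn_def
        using G_X[of "n - b0" "int n" q] b0n by simp
      have F2nz: "F2 \<noteq> 0" unfolding F2_def by (rule qfact_nz[OF q_nz q_not_root])
      have Bnz: "B \<noteq> 0" unfolding B_def by (rule qfact_nz[OF q_nz q_not_root])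
      have par: "even ((length u div 2 + b0) + (length v div 2 + L + (n - b0)))"
      proof -
        obtain N1 where N1: "length u = 2 * N1" using evu by blast
        have vv: "length v = 2 * (n + L - N1)" using N1 lu lv a0n b0n by linarith
        have le: "N1 \<le> n + L" using N1 lu a0n b0n by linarith
        have eq: "(length u div 2 + b0) + (length v div 2 + L + (n - b0)) = 2 * (n + L)"
          unfolding N1 vv using le b0n by simp
        show ?thesis unfolding eq by simp
      qed
      have sg: "\<sigma>1 * s1 = \<sigma>2 * s3 * s2"
        unfolding \<sigma>1_def \<sigma>2_def s1_def s2_def s3_def
        using neg1_par[OF par, where 'a='a] by (simp add: power_add ac_simps)
      have key: "(Dd*F1)/(F2*B) * \<sigma>1 * A * B = \<sigma>2 * s3 * C * Dd"
        by (rule core[OF AF CF F2nz Bnz sg])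
      have RN: "ratN q n a b = Dd * F1" unfolding ratN_def Dd_def F1_def aa bb by simp
      have RD: "ratD q n a b = F2 * B" unfolding ratD_def F2_def B_def aa bb by simp
      define P0 where "P0 = qhpow qh (rho (int a) (int b) (of_nat n / 2)) * inverse (qfact q n)"
      define SR where "SR = sr (ratD q n a b / ratN q n a b)"
      have phi_e: "phi q qh sr n a b = P0 * SR * ((Dd*F1)/(F2*B))"
        using sr_compat[rule_format, of n a b] n a b
        unfolding phi_def P0_def SR_def RN[symmetric] RD[symmetric] by simp
      have psi_e: "psi q qh sr n a b = P0 * SR" unfolding psi_def P0_def SR_def by simp
      have "Kmat q qh sr n a b k w = P0 * SR * ((Dd*F1)/(F2*B)) * (\<sigma>1 * (A * M * B))"
        unfolding LHS phi_e if_P[OF True] Gu by (simp add: \<sigma>1_def B_def)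
      also have "\<dots> = P0 * SR * M * ((Dd*F1)/(F2*B) * \<sigma>1 * A * B)" by (simp add: ac_simps)
      also have "\<dots> = P0 * SR * M * (\<sigma>2 * s3 * C * Dd)" unfolding key ..
      also have "\<dots> = psi q qh sr n a b * (\<sigma>2 * (C * (s3 * M) * Dd))" unfolding psi_e by (simp add: ac_simps)
      also have "\<dots> = tmul (psi q qh sr n a b) (int b - int a - int n)
      (lpow_s Y (int b - int n - 1) (rpow_s X (1 - int a) (ser_neg_sq (DeltaT q (- int n))))) k w"
        unfolding RHS if_P[OF True2] Gv by (simp add: \<sigma>2_def s3_def Dd_def)
      finally show ?thesis .
    qed
  qed
qed

end
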